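(* Let $y_0\in\mathbb{R}$, $b>0$, $\epsilon>0$, and let $f:[y_0,\infty)\to\mathbb{R}$ be such that $p:=1/f$ is well defined and twice differentiable on $[y_0,\infty)$, with $f(y_0)>0$, $f'(y)>0$ and $p''(y)>0$ for all $y\ge y_0$. Assume $b<\int_{y_0}^{\infty}p(y)\,dy$ (possibly $+\infty$), so that the solution $y(x)$ of $y'=f(y)$, $y(0)=y_0$, exists on $[0,b]$; equivalently $y(x)$ is defined by $\int_{y_0}^{y(x)}p(y)\,dy=x$. For $h>0$ and integers $N\ge0$ let $\Sigma_{l,h,N}=\sum_{i=1}^{N}h\,p(y_0+hi)$. Let $0<x_1<x_2<\dots<x_N=b$ be a mesh. Let $n_2^{(1)}$ be the smallest positive integer $n$ with $\Sigma_{l,\epsilon,n}\ge b$ (assumed to exist), and let $j$ be a positive integer satisfying $$j\ge 1+\frac12\cdot\frac{p(y_0)-p(y_0+\epsilon n_2^{(1)}-\epsilon)}{p(y_0+\epsilon n_2^{(1)})}\qquad\text{or}\qquad j\ge\frac12\Big(1+\frac{p(y_0)}{p(y_0+\epsilon n_2^{(1)})}\Big).$$ Put $h^{(j)}=\epsilon/j$, and for each $k$ with $1\le k\le N$ let $n_{2,k}^{(j)}$ be the smallest positive integer $n$ with $\Sigma_{l,h^{(j)},n}\ge x_k$, and $y_{x_k}:=y_0+h^{(j)}n_{2,k}^{(j)}$. Then $$|y(x_k)-y_{x_k}|<\epsilon\quad\text{for all }k,\ 1\le k\le N.$$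
   Context: $\Sigma_{l,h,N}$ is the lower rectangular (right-endpoint) sum with step $h$ for $\int_{y_0}^{y_0+hN}p(y)\,dy$; the empty sum is $0$. *)

theory Defs
  imports "HOL-Analysis.Analysis"
begin

definition Sigma_l :: "(real \<Rightarrow> real) \<Rightarrow> real \<Rightarrow> real \<Rightarrow> nat \<Rightarrow> real" where
  "Sigma_l p y0 h N = (\<Sum>i=1..N. h * p (y0 + h * real i))"

end

theory Submission
  imports Defs "HOL-Analysis.Analysis"
begin
lemma sig_Suc: "Sigma_l p y0 h (Suc m) = Sigma_l p y0 h m + h * p (y0 + h * real (Suc m))"
  by (simp add: Sigma_l_def)

lemma sig_0: "Sigma_l p y0 h 0 = 0" by (simp add: Sigma_l_def)

lemma sig_add: "Sigma_l p y0 h (n + d) = Sigma_l p y0 h n + (\<Sum>r=1..d. h * p (y0 + h * real (n + r)))"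
proof (induction d)
  case 0 then show ?case by simp
next
  case (Suc d)
  have "Sigma_l p y0 h (n + Suc d) = Sigma_l p y0 h (n + d) + h * p (y0 + h * real (Suc (n + d)))"
    using sig_Suc[of p y0 h "n+d"] by simp
  then show ?case using Suc by (simp add: add_ac)
qed

lemma sig_mono:
  assumes "h > 0" "\<forall>t\<ge>y0. p t > 0" "n \<le> n'"
  shows "Sigma_l p y0 h n \<le> Sigma_l p y0 h n'"
proof -
  obtain d where d: "n' = n + d" using assms(3) le_Suc_ex by blast
  have "0 \<le> (\<Sum>r=1..d. h * p (y0 + h * real (n + r)))"
    using assms(1,2) by (intro sum_nonneg) (auto intro!: less_imp_le)
  then show ?thesis using d sig_add[of p y0 h n d] by simp
qed

lemma sig_tail:
  assumes "h > 0" "\<forall>a b. y0 \<le> a \<longrightarrow> a \<le> b \<longrightarrow> p b \<le> p a"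
  shows "Sigma_l p y0 h m + real d * (h * p (y0 + h * real (m + d))) \<le> Sigma_l p y0 h (m + d)"
proof -
  have *: "\<And>r. r\<in>{1..d} \<Longrightarrow> h * p (y0 + h * real (m + d)) \<le> h * p (y0 + h * real (m + r))"
  proof -
    fix r assume r: "r \<in> {1..d}"
    have "p (y0 + h * real (m + d)) \<le> p (y0 + h * real (m + r))"
      using assms r by (intro assms(2)[rule_format]) auto
    then show "h * p (y0 + h * real (m + d)) \<le> h * p (y0 + h * real (m + r))"
      using assms(1) by simp
  qed
  have "real (card {1..d}) * (h * p (y0 + h * real (m + d))) \<le> (\<Sum>r=1..d. h * p (y0 + h * real (m + r)))"
    by (rule sum_bounded_below) (rule *)
  then have "real d * (h * p (y0 + h * real (m + d))) \<le> (\<Sum>r=1..d. h * p (y0 + h * real (m + r)))"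
    by simp
  then show ?thesis using sig_add[of p y0 h m d] by simp
qed

lemma sig_refine:
  assumes "\<epsilon> > 0" "j > 0" "\<forall>a b. y0 \<le> a \<longrightarrow> a \<le> b \<longrightarrow> p b \<le> p a"
  shows "Sigma_l p y0 \<epsilon> m \<le> Sigma_l p y0 (\<epsilon> / real j) (j * m)"
proof (induction m)
  case 0 then show ?case by (simp add: sig_0)
next
  case (Suc m)
  define h where "h = \<epsilon> / real j"
  have hpos: "h > 0" using assms by (simp add: h_def)
  have hj: "h * real j = \<epsilon>" using assms by (simp add: h_def)
  have eq: "j * Suc m = j * m + j" by simp
  have "Sigma_l p y0 h (j*m) + real j * (h * p (y0 + h * real (j*m + j))) \<le> Sigma_l p y0 h (j*m + j)"
    by (rule sig_tail[OF hpos assms(3)])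
  moreover have "h * real (j*m + j) = \<epsilon> * real (Suc m)"
    using hj by (simp add: algebra_simps)
  moreover have "real j * (h * q) = \<epsilon> * q" for q
    using hj by (metis mult.assoc mult.commute)
  ultimately have "Sigma_l p y0 h (j*m) + \<epsilon> * p (y0 + \<epsilon> * real (Suc m)) \<le> Sigma_l p y0 h (j * m + j)"
    by metis
  then have "Sigma_l p y0 h (j*m) + \<epsilon> * p (y0 + \<epsilon> * real (Suc m)) \<le> Sigma_l p y0 h (j * Suc m)"
    using eq by metis
  then show ?case using Suc sig_Suc[of p y0 \<epsilon> m] h_def by simp
qed

theorem theorem3:
  fixes y0 b \<epsilon> :: real
    and f f' p p' p'' :: "real \<Rightarrow> real"
    and y :: "real \<Rightarrow> real"
    and M :: nat and x :: "nat \<Rightarrow> real"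
    and j :: nat
  assumes b_pos: "b > 0" and eps_pos: "\<epsilon> > 0"
    and p_def: "p = (\<lambda>t. 1 / f t)"
    and f_nz: "\<forall>t\<ge>y0. f t \<noteq> 0"
    and f_y0: "f y0 > 0"
    and f_deriv: "\<forall>t\<ge>y0. (f has_real_derivative f' t) (at t within {y0..}) \<and> f' t > 0"
    and p_deriv: "\<forall>t\<ge>y0. (p has_real_derivative p' t) (at t within {y0..})"
    and p'_deriv: "\<forall>t\<ge>y0. (p' has_real_derivative p'' t) (at t within {y0..})"
    and p''_pos: "\<forall>t\<ge>y0. p'' t > 0"
    and b_lt_int: "ennreal b < (\<integral>\<^sup>+ t. indicator {y0..} t * ennreal (p t) \<partial>lborel)"
    and y_init: "y 0 = y0"
    and y_dom: "\<forall>s\<in>{0..b}. y s \<ge> y0"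
    and y_ode: "\<forall>s\<in>{0..b}. (y has_real_derivative f (y s)) (at s within {0..b})"
    and M_pos: "M \<ge> 1"
    and mesh_first: "0 < x 1"
    and mesh_mono: "\<forall>k\<in>{1..<M}. x k < x (Suc k)"
    and mesh_last: "x M = b"
    and n1_ex: "\<exists>n>0. Sigma_l p y0 \<epsilon> n \<ge> b"
    and j_pos: "j > 0"
    and j_bound:
      "(let n1 = (LEAST n. n > 0 \<and> Sigma_l p y0 \<epsilon> n \<ge> b) in
         real j \<ge> 1 + (1/2) * (p y0 - p (y0 + \<epsilon> * real n1 - \<epsilon>)) / p (y0 + \<epsilon> * real n1)
         \<or> real j \<ge> (1/2) * (1 + p y0 / p (y0 + \<epsilon> * real n1)))"
  shows "\<forall>k\<in>{1..M}.
           \<bar>y (x k) - (y0 + (\<epsilon> / real j) *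
              real (LEAST n. n > 0 \<and> Sigma_l p y0 (\<epsilon> / real j) n \<ge> x k))\<bar> < \<epsilon>"
proof -
  have dat: "\<And>g d t. (g has_real_derivative d) (at t within {y0..}) \<Longrightarrow> y0 < t \<Longrightarrow> (g has_real_derivative d) (at t)"
    using at_within_interior[of _ "{y0..}"] by simp
  have fcont: "continuous_on {y0..} f"
    by (rule DERIV_continuous_on[of _ _ f']) (use f_deriv in auto)
  have pcont: "continuous_on {y0..} p"
    by (rule DERIV_continuous_on[of _ _ p']) (use p_deriv in auto)
  have p'cont: "continuous_on {y0..} p'"
    by (rule DERIV_continuous_on[of _ _ p'']) (use p'_deriv in auto)
  have fmono: "f a \<le> f c" if "y0 \<le> a" "a \<le> c" for a c
  proof (rule DERIV_nonneg_imp_increasing_open[OF that(2)])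
    show "\<exists>y. (f has_real_derivative y) (at x) \<and> 0 \<le> y" if "a < x" "x < c" for x
      using f_deriv dat that \<open>y0 \<le> a\<close> by (meson less_eq_real_def order_le_less_trans)
    show "continuous_on {a..c} f" using fcont by (rule continuous_on_subset) (use that in auto)
  qed
  have fpos: "f t > 0" if "y0 \<le> t" for t
    using fmono[OF order_refl that] f_y0 by simp
  have ppos: "\<forall>t\<ge>y0. p t > 0" using fpos p_def by simp
  have pmono: "\<forall>a c. y0 \<le> a \<longrightarrow> a \<le> c \<longrightarrow> p c \<le> p a"
    using fmono fpos p_def by (auto intro!: frac_le)
  have p'mono: "p' a \<le> p' c" if "y0 \<le> a" "a \<le> c" for a c
  proof (rule DERIV_nonneg_imp_increasing_open[OF that(2)])
    show "\<exists>y. (p' has_real_derivative y) (at x) \<and> 0 \<le> y" if "a < x" "x < c" for x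
      using p'_deriv p''_pos dat that \<open>y0 \<le> a\<close> by (meson less_eq_real_def order_le_less_trans)
    show "continuous_on {a..c} p'" using p'cont by (rule continuous_on_subset) (use that in auto)
  qed
  have tang: "p c - (c - a) * p' c \<le> p a" if "y0 \<le> a" "a \<le> c" for a c
  proof -
    have "(\<lambda>t. p t - t * p' c) a \<ge> (\<lambda>t. p t - t * p' c) c"
    proof (rule DERIV_nonpos_imp_decreasing_open[OF that(2)])
      show "\<exists>y. ((\<lambda>t. p t - t * p' c) has_real_derivative y) (at x) \<and> y \<le> 0" if "a < x" "x < c" for x
      proof -
        have pd: "(p has_real_derivative p' x) (at x)"
          using p_deriv dat that \<open>y0 \<le> a\<close> by (meson less_eq_real_def order_le_less_trans)
        have "((\<lambda>t. p t - t * p' c) has_real_derivative p' x - 1 * p' c) (at x)"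
          using pd by (auto intro!: derivative_eq_intros)
        moreover have "p' x - 1 * p' c \<le> 0" using p'mono[of x c] that \<open>y0 \<le> a\<close> by simp
        ultimately show ?thesis by blast
      qed
      show "continuous_on {a..c} (\<lambda>t. p t - t * p' c)"
        using pcont that by (intro continuous_intros) (auto intro: continuous_on_subset)
    qed
    then show ?thesis by (simp add: algebra_simps)
  qed
  define n1 where "n1 = (LEAST n. n > 0 \<and> Sigma_l p y0 \<epsilon> n \<ge> b)"
  have n1P: "n1 > 0 \<and> Sigma_l p y0 \<epsilon> n1 \<ge> b"
    unfolding n1_def using LeastI_ex[OF n1_ex] .
  define B where "B = max (y b) (y0 + \<epsilon> * real n1) + 1"
  define P where "P = (\<lambda>u. integral {y0..u} p)"
  have pcB: "continuous_on {y0..B} p" using pcont by (rule continuous_on_subset) auto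
  have PD: "(P has_real_derivative p t) (at t within {y0..B})" if "t \<in> {y0..B}" for t
    unfolding P_def by (rule integral_has_real_derivative[OF pcB that])
  have PDat: "(P has_real_derivative p t) (at t)" if "y0 < t" "t < B" for t
    using PD[of t] that at_within_interior[of t "{y0..B}"] by simp
  have Pcont: "continuous_on {y0..B} P"
    by (rule DERIV_continuous_on[of _ _ p]) (use PD in auto)
  have P0: "P y0 = 0" unfolding P_def by simp
  have Pstrict: "P a < P c" if "y0 \<le> a" "a < c" "c \<le> B" for a c
  proof (rule DERIV_pos_imp_increasing_open[OF that(2)])
    show "\<exists>y. (P has_real_derivative y) (at x) \<and> 0 < y" if "a < x" "x < c" for x
      using PDat[of x] ppos that \<open>y0 \<le> a\<close> \<open>c \<le> B\<close> by force
    show "continuous_on {a..c} P" using Pcont by (rule continuous_on_subset) (use that in auto)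
  qed
  have Plow: "(c - a) * p c \<le> P c - P a" if "y0 \<le> a" "a \<le> c" "c \<le> B" for a c
  proof -
    have "(\<lambda>t. P t - t * p c) a \<le> (\<lambda>t. P t - t * p c) c"
    proof (rule DERIV_nonneg_imp_increasing_open[OF that(2)])
      show "\<exists>y. ((\<lambda>t. P t - t * p c) has_real_derivative y) (at x) \<and> 0 \<le> y" if "a < x" "x < c" for x
      proof -
        have "((\<lambda>t. P t - t * p c) has_real_derivative p x - 1 * p c) (at x)"
          using PDat[of x] that \<open>y0 \<le> a\<close> \<open>c \<le> B\<close> by (auto intro!: derivative_eq_intros)
        moreover have "p x - 1 * p c \<ge> 0" using pmono that \<open>y0 \<le> a\<close> by force
        ultimately show ?thesis by blast
      qed
      show "continuous_on {a..c} (\<lambda>t. P t - t * p c)"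
        using Pcont that by (intro continuous_intros) (auto intro: continuous_on_subset)
    qed
    then show ?thesis by (simp add: algebra_simps)
  qed
  have Pup: "P c - P a \<le> (c - a) * (p a + p c) / 2" if "y0 \<le> a" "a \<le> c" "c \<le> B" for a c
  proof -
    have "(\<lambda>t. P t - (t - a) * (p a + p t) / 2) a \<ge> (\<lambda>t. P t - (t - a) * (p a + p t) / 2) c"
    proof (rule DERIV_nonpos_imp_decreasing_open[OF that(2)])
      show "\<exists>y. ((\<lambda>t. P t - (t - a) * (p a + p t) / 2) has_real_derivative y) (at x) \<and> y \<le> 0"
        if "a < x" "x < c" for x
      proof -
        have pd: "(p has_real_derivative p' x) (at x)"
          using p_deriv dat that \<open>y0 \<le> a\<close> by (meson less_eq_real_def order_le_less_trans)
        have "((\<lambda>t. P t - (t - a) * (p a + p t) / 2) has_real_derivative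
               p x - ((1 - 0) * (p a + p x) + (x - a) * (0 + p' x)) / 2) (at x)"
          using PDat[of x] pd that \<open>y0 \<le> a\<close> \<open>c \<le> B\<close> by (auto intro!: derivative_eq_intros)
        moreover have "p x - ((1 - 0) * (p a + p x) + (x - a) * (0 + p' x)) / 2 \<le> 0"
          using tang[of a x] that \<open>y0 \<le> a\<close> by simp
        ultimately show ?thesis by blast
      qed
      show "continuous_on {a..c} (\<lambda>t. P t - (t - a) * (p a + p t) / 2)"
        using Pcont pcont that by (intro continuous_intros) (auto intro: continuous_on_subset)
    qed
    then show ?thesis by (simp add: field_simps)
  qed
  have sums: "Sigma_l p y0 h m \<le> P (y0 + h * real m) \<and>
      P (y0 + h * real m) \<le> Sigma_l p y0 h m + h / 2 * (p y0 - p (y0 + h * real m))"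
    if "h > 0" "y0 + h * real m \<le> B" for h m
    using that(2)
  proof (induction m)
    case 0 then show ?case by (simp add: sig_0 P0)
  next
    case (Suc m)
    let ?a = "y0 + h * real m" and ?c = "y0 + h * real (Suc m)"
    have ac: "?c - ?a = h" by (simp add: algebra_simps)
    have a0: "y0 \<le> ?a" using \<open>h > 0\<close> by simp
    have aleq: "?a \<le> ?c" using \<open>h > 0\<close> by simp
    have IH: "Sigma_l p y0 h m \<le> P ?a \<and> P ?a \<le> Sigma_l p y0 h m + h / 2 * (p y0 - p ?a)"
      using Suc aleq by linarith
    have L: "h * p ?c \<le> P ?c - P ?a" using Plow[OF a0 aleq Suc.prems] ac by simp
    have U: "P ?c - P ?a \<le> h * (p ?a + p ?c) / 2" using Pup[OF a0 aleq Suc.prems] ac by simp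
    show ?case using IH L U sig_Suc[of p y0 h m] by (simp add: algebra_simps)
  qed
  have ycont: "continuous_on {0..b} y"
    by (rule DERIV_continuous_on[of _ _ "\<lambda>s. f (y s)"]) (use y_ode in auto)
  have ymono: "y s \<le> y t" if "0 \<le> s" "s \<le> t" "t \<le> b" for s t
  proof (rule DERIV_nonneg_imp_increasing_open[OF that(2)])
    show "\<exists>d. (y has_real_derivative d) (at x) \<and> 0 \<le> d" if "s < x" "x < t" for x
    proof -
      have "x \<in> interior {0..b}" using that \<open>0 \<le> s\<close> \<open>t \<le> b\<close> by simp
      then have "(y has_real_derivative f (y x)) (at x)"
        using y_ode[rule_format, of x] at_within_interior[of x "{0..b}"] that \<open>0 \<le> s\<close> \<open>t \<le> b\<close> by auto
      moreover have "f (y x) > 0" using fpos y_dom that \<open>0 \<le> s\<close> \<open>t \<le> b\<close> by auto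
      ultimately show ?thesis using less_imp_le by blast
    qed
    show "continuous_on {s..t} y" using ycont by (rule continuous_on_subset) (use that in auto)
  qed
  have yB: "y s \<in> {y0..B}" if "s \<in> {0..b}" for s
    using y_dom that ymono[of s b] b_pos unfolding B_def by auto
  have Py: "P (y s) = s" if "s \<in> {0..b}" for s
  proof -
    have "\<exists>c. \<forall>s\<in>{0..b}. (\<lambda>s. P (y s) - s) s = c"
    proof (rule has_field_derivative_zero_constant)
      show "convex {0..b::real}" by simp
      fix s assume s: "s \<in> {0..b}"
      have "(P has_real_derivative p (y s)) (at (y s) within y ` {0..b})"
        using PD[OF yB[OF s]] by (rule has_field_derivative_subset) (use yB in auto)
      from DERIV_image_chain[OF this y_ode[rule_format, OF s]]
      have "((\<lambda>s. P (y s)) has_real_derivative p (y s) * f (y s)) (at s within {0..b})"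
        by (simp add: o_def)
      moreover have "p (y s) * f (y s) = 1" using p_def fpos[of "y s"] y_dom s by simp
      ultimately have "((\<lambda>s. P (y s)) has_real_derivative 1) (at s within {0..b})" by simp
      then have "((\<lambda>s. P (y s) - s) has_real_derivative 1 - 1) (at s within {0..b})"
        by (intro derivative_intros)
      then show "((\<lambda>s. P (y s) - s) has_real_derivative 0) (at s within {0..b})" by simp
    qed
    then obtain c where c: "\<forall>s\<in>{0..b}. P (y s) - s = c" by auto
    have "c = 0" using c[rule_format, of 0] b_pos y_init P0 by simp
    then show ?thesis using c that by auto
  qed
  have xmono: "\<forall>i. 1 \<le> i \<longrightarrow> i \<le> l \<longrightarrow> l \<le> M \<longrightarrow> x i \<le> x l" for l
  proof (induction l)
    case 0 then show ?case by simp
  next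
    case (Suc l)
    show ?case
    proof (intro allI impI)
      fix i assume i: "1 \<le> i" "i \<le> Suc l" "Suc l \<le> M"
      show "x i \<le> x (Suc l)"
      proof (cases "i = Suc l")
        case False
        then have "x i \<le> x l" using Suc.IH i by auto
        moreover have "x l < x (Suc l)" using mesh_mono i False by auto
        ultimately show ?thesis by simp
      qed simp
    qed
  qed
  define h where "h = \<epsilon> / real j"
  have hpos: "h > 0" using eps_pos j_pos unfolding h_def by simp
  have hj: "h * real j = \<epsilon>" using j_pos unfolding h_def by simp
  have main: "\<bar>y (x k) - (y0 + h * real (LEAST n. n > 0 \<and> Sigma_l p y0 h n \<ge> x k))\<bar> < \<epsilon>"
    if k: "k \<in> {1..M}" for k
  proof -
    have xk0: "x k > 0" using xmono[of k] k mesh_first by force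
    have xkb: "x k \<le> b" using xmono[of M] k mesh_last by force
    define nk where "nk = (LEAST n. n > 0 \<and> Sigma_l p y0 h n \<ge> x k)"
    have ex: "j * n1 > 0 \<and> Sigma_l p y0 h (j * n1) \<ge> x k"
      using sig_refine[OF eps_pos j_pos pmono, of n1] n1P j_pos xkb unfolding h_def by auto
    have nkP: "nk > 0 \<and> Sigma_l p y0 h nk \<ge> x k"
      unfolding nk_def by (rule LeastI[of _ "j * n1"]) (rule ex)
    have nkle: "nk \<le> j * n1" unfolding nk_def by (rule Least_le) (rule ex)
    have hnk: "h * real nk \<le> \<epsilon> * real n1"
    proof -
      have "h * real nk \<le> h * real (j * n1)" using mult_left_mono[OF iffD2[OF of_nat_le_iff nkle], of h] hpos by simp
      also have "\<dots> = \<epsilon> * real n1" using hj by (simp add: mult.assoc[symmetric])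
      finally show ?thesis .
    qed
    have nkB: "y0 + h * real nk \<le> B" using hnk unfolding B_def by linarith
    have prev: "Sigma_l p y0 h (nk - 1) < x k"
    proof (cases "nk = 1")
      case True then show ?thesis using xk0 by (simp add: sig_0)
    next
      case False
      then have "nk - 1 < nk" "nk - 1 > 0" using nkP by auto
      from not_less_Least[OF this(1)[unfolded nk_def]] this(2)
      show ?thesis unfolding nk_def by auto
    qed
    define yk where "yk = y (x k)"
    have xkin: "x k \<in> {0..b}" using xk0 xkb by simp
    have ykB: "yk \<in> {y0..B}" using yB[OF xkin] unfolding yk_def .
    have Pyk: "P yk = x k" using Py[OF xkin] unfolding yk_def .
    have up: "yk \<le> y0 + h * real nk"
    proof (rule ccontr)
      assume "\<not> ?thesis"
      then have "P (y0 + h * real nk) < P yk"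
        using Pstrict[of "y0 + h * real nk" yk] ykB hpos by simp
      moreover have "Sigma_l p y0 h nk \<le> P (y0 + h * real nk)" using sums[OF hpos nkB] by simp
      ultimately show False using Pyk nkP by simp
    qed
    have low: "y0 + h * real nk - \<epsilon> < yk"
    proof (cases "nk < j")
      case True
      then have "h * real nk < h * real j" using hpos by simp
      then show ?thesis using hj ykB by simp
    next
      case False
      define m where "m = nk - j"
      have nkm: "nk = m + j" using False unfolding m_def by simp
      have hm: "h * real m = h * real nk - \<epsilon>" using nkm hj by (simp add: algebra_simps)
      have mB: "y0 + h * real m \<le> B" using nkB hm eps_pos by simp
      have am: "y0 \<le> y0 + h * real m" using hpos by simp
      define q where "q = p (y0 + \<epsilon> * real n1)"
      have qpos: "q > 0" unfolding q_def using ppos eps_pos by simp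
      have pm1: "p (y0 + \<epsilon> * real n1 - \<epsilon>) \<le> p (y0 + h * real m)"
        using pmono am hm hnk by auto
      have pm2: "q \<le> p (y0 + h * real m)"
        unfolding q_def using pmono am hm hnk eps_pos by auto
      have pt: "q \<le> p (y0 + h * real (m + (j - 1)))"
      proof -
        have "h * real (m + (j - 1)) \<le> h * real nk" using nkm hpos by simp
        then show ?thesis unfolding q_def using pmono hpos hnk
          by (metis add_le_cancel_left le_add_same_cancel1 of_nat_0_le_iff order_trans zero_le_mult_iff less_imp_le)
      qed
      have key: "(1/2) * (p y0 - p (y0 + h * real m)) \<le> (real j - 1) * q"
      proof -
        from j_bound[unfolded Let_def, folded n1_def, folded q_def]
        consider "real j \<ge> 1 + (1/2) * (p y0 - p (y0 + \<epsilon> * real n1 - \<epsilon>)) / q"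
          | "real j \<ge> (1/2) * (1 + p y0 / q)" by blast
        then show ?thesis
        proof cases
          case 1
          then have "(1/2) * (p y0 - p (y0 + \<epsilon> * real n1 - \<epsilon>)) / q \<le> real j - 1" by simp
          then have "(1/2) * (p y0 - p (y0 + \<epsilon> * real n1 - \<epsilon>)) \<le> (real j - 1) * q"
            using qpos by (simp add: pos_divide_le_eq)
          then show ?thesis using pm1 by simp
        next
          case 2
          then have "(1/2) * (q + p y0) \<le> real j * q" using qpos
            by (simp add: field_simps)
          then show ?thesis using pm2 by (simp add: algebra_simps)
        qed
      qed
      have tail: "Sigma_l p y0 h m + real (j - 1) * (h * p (y0 + h * real (m + (j - 1))))
                  \<le> Sigma_l p y0 h (m + (j - 1))"
        by (rule sig_tail[OF hpos pmono])
      have rj: "real (j - 1) = real j - 1" using j_pos by (simp add: of_nat_diff)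
      have "h / 2 * (p y0 - p (y0 + h * real m)) \<le> h * ((real j - 1) * q)"
        using mult_left_mono[OF key, of h] hpos by simp
      also have "\<dots> \<le> h * ((real j - 1) * p (y0 + h * real (m + (j - 1))))"
        using pt hpos j_pos by (intro mult_left_mono) auto
      finally have "h / 2 * (p y0 - p (y0 + h * real m)) \<le> real (j - 1) * (h * p (y0 + h * real (m + (j - 1))))"
        using rj by (simp add: algebra_simps)
      moreover have "m + (j - 1) = nk - 1" using nkm j_pos by simp
      then have "Sigma_l p y0 h (m + (j - 1)) = Sigma_l p y0 h (nk - 1)" by simp
      ultimately have "P (y0 + h * real m) < x k"
        using sums[OF hpos mB] tail prev by linarith
      then have "y0 + h * real m < yk"
      proof -
        assume A: "P (y0 + h * real m) < x k"
        show ?thesis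
        proof (rule ccontr)
          assume "\<not> ?thesis"
          then consider "yk = y0 + h * real m" | "yk < y0 + h * real m" by linarith
          then show False
          proof cases
            case 1 then show False using A Pyk by simp
          next
            case 2 then show False using A Pyk Pstrict[of yk "y0 + h * real m"] ykB mB by simp
          qed
        qed
      qed
      then show ?thesis using hm by simp
    qed
    show ?thesis using up low unfolding yk_def nk_def by simp
  qed
  show ?thesis using main unfolding h_def by blast
qed

end
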